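(* Let $n\ge 2$ and $\alpha_1,\dots,\alpha_n\in\mathbb{R}$. (a) Let $D$ be the $n\times n$ Euclidean distance matrix of the points $\alpha_1\mathbf{e}_1,\dots,\alpha_n\mathbf{e}_n\in\mathbb{R}^n$ (an axis simplex), i.e. $D_{ij}=\sqrt{\alpha_i^2+\alpha_j^2}$ for $i\neq j$. (b) Let $D'$ be the $(n+1)\times(n+1)$ distance matrix of the points $\mathbf{0},\alpha_1\mathbf{e}_1,\dots,\alpha_n\mathbf{e}_n$ (a simplex with an orthogonal corner), i.e. $D'_{ij}=\sqrt{\alpha_i^2+\alpha_j^2}$ for $i\ne j\in\{0,\dots,n\}$ with $\alpha_0=0$. Assume in each case that the off-diagonal entries are pairwise distinct. Then for every $k>0$ and all $t\in[0,1]$, the $k$-th Betti curve of $D$ (resp. $D'$) is identically zero.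
   Context: Betti curves of a symmetric matrix. Let $M$ be a real symmetric $n\times n$ matrix whose $\binom{n}{2}$ off-diagonal entries $M_{ij}$ ($i<j$) are pairwise distinct. The ordering matrix $\widehat{M}$ is defined by $\widehat{M}_{ij}=k$ if $M_{ij}$ is the $k$-th smallest off-diagonal entry. For $t\in[0,1]$, $G_t=G_t(M)$ is the graph on vertex set $\{1,\dots,n\}$ with edge set $\{\{i,j\} : \widehat{M}_{ij}\le t\binom{n}{2}\}$ (so edges are added in increasing order of the entries $M_{ij}$; $G_0$ has no edges and $G_1$ is complete). $X(G_t)$ is the clique complex of $G_t$ (every $k$-clique of $G_t$ is filled in by a $(k-1)$-dimensional simplex). The $i$-th Betti curve of $M$ is $\beta_i(t)=\operatorname{rank} H_i(X(G_t);\mathbf{k})$, with $H_i$ simplicial homology with coefficients in a fixed field $\mathbf{k}$. $\mathbf{e}_1,\dots,\mathbf{e}_n$ denote the standard basis vectors of $\mathbb{R}^n$. *)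

theory Defs
  imports Complex_Main "HOL-Library.Function_Algebras"
begin

text \<open>Symmetric real matrices are represented as functions nat => nat => real,
  restricted to a finite vertex (index) set V.\<close>

definition offdiag_distinct :: "nat set \<Rightarrow> (nat \<Rightarrow> nat \<Rightarrow> real) \<Rightarrow> bool" where
  "offdiag_distinct V M \<longleftrightarrow> inj_on (\<lambda>(i,j). M i j) {(i,j). i \<in> V \<and> j \<in> V \<and> i < j}"

definition ordering_matrix :: "nat set \<Rightarrow> (nat \<Rightarrow> nat \<Rightarrow> real) \<Rightarrow> nat \<Rightarrow> nat \<Rightarrow> nat" where
  "ordering_matrix V M i j = card {(a,b). a \<in> V \<and> b \<in> V \<and> a < b \<and> M a b \<le> M i j}"

definition Gt_edge :: "nat set \<Rightarrow> (nat \<Rightarrow> nat \<Rightarrow> real) \<Rightarrow> real \<Rightarrow> nat \<Rightarrow> nat \<Rightarrow> bool" where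
  "Gt_edge V M t i j \<longleftrightarrow> i \<in> V \<and> j \<in> V \<and> i \<noteq> j \<and>
     real (ordering_matrix V M i j) \<le> t * real (card V choose 2)"

definition clique_simplices :: "nat set \<Rightarrow> (nat \<Rightarrow> nat \<Rightarrow> bool) \<Rightarrow> nat \<Rightarrow> nat set set" where
  "clique_simplices V E q = {S. S \<subseteq> V \<and> card S = q + 1 \<and> (\<forall>i\<in>S. \<forall>j\<in>S. i \<noteq> j \<longrightarrow> E i j)}"

text \<open>Simplicial q-chains with coefficients in a field 'f (simplices oriented by
  the natural order of the vertices).\<close>
definition chains :: "'f::field itself \<Rightarrow> nat set \<Rightarrow> (nat \<Rightarrow> nat \<Rightarrow> bool) \<Rightarrow> nat \<Rightarrow> (nat set \<Rightarrow> 'f) set" where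
  "chains _ V E q = {c. \<forall>S. c S \<noteq> 0 \<longrightarrow> S \<in> clique_simplices V E q}"

text \<open>Boundary map d_q : C_q -> C_(q-1), d_0 = 0.
  d(v_0..v_q) = sum_i (-1)^i (v_0..^v_i..v_q).\<close>
definition boundary :: "nat set \<Rightarrow> (nat \<Rightarrow> nat \<Rightarrow> bool) \<Rightarrow> nat \<Rightarrow> (nat set \<Rightarrow> 'f::field) \<Rightarrow> (nat set \<Rightarrow> 'f)" where
  "boundary V E q c = (\<lambda>T. if q = 0 then 0
      else if T \<in> clique_simplices V E (q - 1)
      then (\<Sum>v\<in>V - T. (-1) ^ card {w\<in>T. w < v} * c (insert v T))
      else 0)"

definition cycles :: "'f::field itself \<Rightarrow> nat set \<Rightarrow> (nat \<Rightarrow> nat \<Rightarrow> bool) \<Rightarrow> nat \<Rightarrow> (nat set \<Rightarrow> 'f) set" where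
  "cycles F V E q = {c \<in> chains F V E q. boundary V E q c = 0}"

definition boundaries :: "'f::field itself \<Rightarrow> nat set \<Rightarrow> (nat \<Rightarrow> nat \<Rightarrow> bool) \<Rightarrow> nat \<Rightarrow> (nat set \<Rightarrow> 'f) set" where
  "boundaries F V E q = boundary V E (q + 1) ` chains F V E (q + 1)"

definition betti :: "'f::field itself \<Rightarrow> nat set \<Rightarrow> (nat \<Rightarrow> nat \<Rightarrow> bool) \<Rightarrow> nat \<Rightarrow> nat" where
  "betti F V E q =
     vector_space.dim (\<lambda>(a::'f) (c::nat set \<Rightarrow> 'f). (\<lambda>S. a * c S)) (cycles F V E q)
   - vector_space.dim (\<lambda>(a::'f) (c::nat set \<Rightarrow> 'f). (\<lambda>S. a * c S)) (boundaries F V E q)"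

definition betti_curve :: "'f::field itself \<Rightarrow> nat set \<Rightarrow> (nat \<Rightarrow> nat \<Rightarrow> real) \<Rightarrow> nat \<Rightarrow> real \<Rightarrow> nat" where
  "betti_curve F V M k t = betti F V (Gt_edge V M t) k"

definition axis_dist :: "(nat \<Rightarrow> real) \<Rightarrow> nat \<Rightarrow> nat \<Rightarrow> real" where
  "axis_dist \<alpha> i j = (if i = j then 0 else sqrt ((\<alpha> i)^2 + (\<alpha> j)^2))"

end

theory Submission
  imports Defs
begin

lemma card_less_insert:
  assumes "finite A" "v \<notin> A"
  shows "card {x\<in>insert v A. x < w} = card {x\<in>A. x < (w::nat)} + (if v < w then 1 else 0)"
proof (cases "v < w")
  case True
  then have "{x\<in>insert v A. x < w} = insert v {x\<in>A. x < w}" by auto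
  then show ?thesis using assms True by simp
next
  case False
  then have "{x\<in>insert v A. x < w} = {x\<in>A. x < w}" by auto
  then show ?thesis using False by simp
qed

lemma sign_swap:
  assumes "finite A" "v \<notin> A" "w \<notin> A" "v \<noteq> (w::nat)"
  shows "((-1::'f::field) ^ card {x\<in>insert v A. x < w}) * (-1) ^ card {x\<in>insert w A. x < v}
       = - ((-1) ^ card {x\<in>A. x < w} * (-1) ^ card {x\<in>A. x < v})"
proof -
  have e1: "card {x\<in>insert v A. x < w} = card {x\<in>A. x < w} + (if v < w then 1 else 0)"
    using assms card_less_insert by blast
  have e2: "card {x\<in>insert w A. x < v} = card {x\<in>A. x < v} + (if w < v then 1 else 0)"
    using assms card_less_insert by blast
  show ?thesis unfolding e1 e2 using assms(4) by (cases "v < w") (auto simp: power_add)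
qed

lemma sign_sq: "((-1::'f::field) ^ n) * (-1) ^ n = 1"
  by (simp flip: power_mult_distrib)

lemma fun_sum_apply: "(sum f A) x = (\<Sum>a\<in>A. f a x)"
  by (induction A rule: infinite_finite_induct) auto

lemma two_elems:
  assumes "finite T" "card T \<ge> 2" "x \<in> T"
  obtains y where "y \<in> T" "y \<noteq> x"
proof -
  have "\<not> T \<subseteq> {x}"
  proof
    assume "T \<subseteq> {x}"
    then have "card T \<le> card {x}" by (intro card_mono) auto
    then show False using assms by simp
  qed
  then show ?thesis using that by auto
qed

lemma cone_ext:
  assumes fin: "finite V" and vV: "v \<in> V"
    and Ein: "\<And>x y. E x y \<Longrightarrow> x \<in> V \<and> y \<in> V \<and> x \<noteq> y"
    and Esym: "\<And>x y. E x y \<Longrightarrow> E y x"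
    and Econe: "\<And>x y. E x y \<Longrightarrow> x \<noteq> v \<Longrightarrow> E x v"
    and T: "T \<in> clique_simplices V E p" and p: "p > 0" and vT: "v \<notin> T"
  shows "insert v T \<in> clique_simplices V E (Suc p)"
proof -
  have TV: "T \<subseteq> V" and cT: "card T = p + 1" and cl: "\<forall>i\<in>T. \<forall>j\<in>T. i \<noteq> j \<longrightarrow> E i j"
    using T by (auto simp: clique_simplices_def)
  have finT: "finite T" using TV fin finite_subset by blast
  have Ejv: "E j v" if jT: "j \<in> T" for j
  proof -
    obtain y where "y \<in> T" "y \<noteq> j" using two_elems[OF finT _ jT] cT p by auto
    then have "E j y" using cl jT by auto
    moreover have "j \<noteq> v" using vT jT by auto
    ultimately show ?thesis using Econe by blast
  qed
  show ?thesis unfolding clique_simplices_def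
    using TV vV cT finT vT cl Ejv Esym by auto
qed

lemma cone_cycles_are_boundaries:
  fixes E :: "nat \<Rightarrow> nat \<Rightarrow> bool" and z :: "nat set \<Rightarrow> 'f::field"
  assumes fin: "finite V" and vV: "v \<in> V"
    and Ein: "\<And>x y. E x y \<Longrightarrow> x \<in> V \<and> y \<in> V \<and> x \<noteq> y"
    and Esym: "\<And>x y. E x y \<Longrightarrow> E y x"
    and Econe: "\<And>x y. E x y \<Longrightarrow> x \<noteq> v \<Longrightarrow> E x v"
    and q: "q > 0"
    and z: "z \<in> cycles TYPE('f) V E q"
  shows "z \<in> boundaries TYPE('f) V E q"
proof -
  let ?CS = "clique_simplices V E"
  define \<epsilon> :: "nat \<Rightarrow> nat set \<Rightarrow> 'f" where "\<epsilon> w T = (-1) ^ card {x\<in>T. x < w}" for w T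
  define h where "h = (\<lambda>S. if v \<in> S \<and> S \<in> ?CS (q+1) then \<epsilon> v (S - {v}) * z (S - {v}) else 0)"
  have zc: "z \<in> chains TYPE('f) V E q" and dz: "boundary V E q z = 0"
    using z by (auto simp: cycles_def)
  have zsupp: "S \<in> ?CS q" if "z S \<noteq> 0" for S using zc that by (auto simp: chains_def)
  have hc: "h \<in> chains TYPE('f) V E (q+1)" by (auto simp: chains_def h_def)
  have ce: "insert v T \<in> ?CS (Suc p)" if "T \<in> ?CS p" "p > 0" "v \<notin> T" for T p
    using cone_ext[of V v E T p] fin vV Ein Esym Econe that by blast
  have "boundary V E (q+1) h = z"
  proof
    fix S
    show "boundary V E (q+1) h S = z S"
    proof (cases "S \<in> ?CS q")
      case False
      then show ?thesis using zsupp by (auto simp: boundary_def)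
    next
      case SC: True
      have bd: "boundary V E (q+1) h S = (\<Sum>w\<in>V-S. \<epsilon> w S * h (insert w S))"
        using SC by (simp add: boundary_def \<epsilon>_def)
      have SV: "S \<subseteq> V" and cardS: "card S = q+1" using SC by (auto simp: clique_simplices_def)
      have finS: "finite S" using SV fin finite_subset by blast
      show ?thesis
      proof (cases "v \<in> S")
        case False
        have ins: "insert v S \<in> ?CS (q+1)" using ce[OF SC q False] by simp
        have hv: "h (insert v S) = \<epsilon> v S * z S"
          using ins False by (simp add: h_def)
        have "(\<Sum>w\<in>V-S. \<epsilon> w S * h (insert w S)) = \<epsilon> v S * h (insert v S) + (\<Sum>w\<in>V-S-{v}. \<epsilon> w S * h (insert w S))"
          using vV False fin by (subst sum.remove[of _ v]) auto
        also have "(\<Sum>w\<in>V-S-{v}. \<epsilon> w S * h (insert w S)) = 0"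
          using False by (intro sum.neutral) (auto simp: h_def)
        finally show ?thesis using bd hv by (simp add: \<epsilon>_def sign_sq flip: mult.assoc)
      next
        case True
        define A where "A = S - {v}"
        have SA: "S = insert v A" and vA: "v \<notin> A" using True by (auto simp: A_def)
        have finA: "finite A" using finS by (simp add: A_def)
        have cA: "card A = q" using cardS True finS by (simp add: A_def)
        have AC: "A \<in> ?CS (q-1)" using SC cA q by (auto simp: clique_simplices_def A_def)
        have "boundary V E q z A = 0" using dz by simp
        then have d0: "(\<Sum>w\<in>V-A. \<epsilon> w A * z (insert w A)) = 0"
          using AC q by (simp add: boundary_def \<epsilon>_def)
        have VA: "V - A = insert v (V - S)" using vV SA vA by auto
        have d1: "\<epsilon> v A * z S + (\<Sum>w\<in>V-S. \<epsilon> w A * z (insert w A)) = 0"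
        proof -
          have "(\<Sum>w\<in>insert v (V-S). \<epsilon> w A * z (insert w A)) = \<epsilon> v A * z (insert v A) + (\<Sum>w\<in>V-S. \<epsilon> w A * z (insert w A))"
            by (rule sum.insert) (use fin True in auto)
          then show ?thesis using d0 unfolding VA SA[symmetric] by simp
        qed
        have hw: "h (insert w S) = \<epsilon> v (insert w A) * z (insert w A)" if w: "w \<in> V - S" for w
        proof -
          have wv: "w \<noteq> v" using w True by auto
          have e: "insert w S - {v} = insert w A" using SA vA wv by auto
          show ?thesis
          proof (cases "insert w S \<in> ?CS (q+1)")
            case True
            then show ?thesis using e SA by (simp add: h_def)
          next
            case False
            have "z (insert w A) = 0"
            proof (rule ccontr)
              assume "z (insert w A) \<noteq> 0"
              then have "insert w A \<in> ?CS q" by (rule zsupp)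
              from ce[OF this q] vA wv have "insert v (insert w A) \<in> ?CS (Suc q)" by simp
              then show False using False SA by (simp add: insert_commute)
            qed
            then show ?thesis using e by (simp add: h_def)
          qed
        qed
        have tw: "\<epsilon> w S * h (insert w S) = - (\<epsilon> v A * (\<epsilon> w A * z (insert w A)))" if w: "w \<in> V - S" for w
        proof -
          have "w \<notin> A" "v \<noteq> w" using w SA by auto
          then have "\<epsilon> w S * \<epsilon> v (insert w A) = - (\<epsilon> w A * \<epsilon> v A)"
            unfolding \<epsilon>_def SA using sign_swap[OF finA vA] by blast
          then have "\<epsilon> w S * \<epsilon> v (insert w A) * z (insert w A) = - (\<epsilon> w A * \<epsilon> v A) * z (insert w A)"
            by simp
          then show ?thesis unfolding hw[OF w] by (simp add: algebra_simps)
        qed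
        have "boundary V E (q+1) h S = - (\<epsilon> v A * (\<Sum>w\<in>V-S. \<epsilon> w A * z (insert w A)))"
          unfolding bd using tw by (simp add: sum_distrib_left sum_negf)
        also have "(\<Sum>w\<in>V-S. \<epsilon> w A * z (insert w A)) = - (\<epsilon> v A * z S)"
          using d1 by (simp add: eq_neg_iff_add_eq_0 add.commute)
        finally show ?thesis by (simp add: \<epsilon>_def sign_sq flip: mult.assoc)
      qed
    qed
  qed
  then show ?thesis using hc unfolding boundaries_def by (metis image_eqI)
qed


lemma vs_fun: "vector_space (\<lambda>(a::'f::field) (c::'b \<Rightarrow> 'f). (\<lambda>S. a * c S))"
  by (simp add: vector_space_def fun_eq_iff algebra_simps)

lemma betti_zero:
  fixes E :: "nat \<Rightarrow> nat \<Rightarrow> bool" and q :: nat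
  assumes fin: "finite V"
  and sub: "cycles TYPE('f::field) V E q \<subseteq> boundaries TYPE('f) V E q"
  shows "betti TYPE('f) V E q = 0"
proof -
  interpret vs: vector_space "\<lambda>(a::'f) (c::nat set \<Rightarrow> 'f). (\<lambda>S. a * c S)" by (rule vs_fun)
  define W where "W = (\<lambda>S. (\<lambda>T. if T = S then (1::'f) else 0)) ` clique_simplices V E q"
  have finCS: "finite (clique_simplices V E q)"
    by (rule finite_subset[of _ "Pow V"]) (use fin in \<open>auto simp: clique_simplices_def\<close>)
  have finW: "finite W" using finCS by (simp add: W_def)
  have chW: "chains TYPE('f) V E q \<subseteq> vs.span W"
  proof
    fix c assume c: "c \<in> chains TYPE('f) V E q"
    have "c = (\<Sum>S\<in>clique_simplices V E q. (\<lambda>T. c S * (if T = S then 1 else 0)))"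
    proof
      fix T
      show "c T = (\<Sum>S\<in>clique_simplices V E q. (\<lambda>T. c S * (if T = S then 1 else 0))) T"
        unfolding fun_sum_apply using c finCS by (auto simp: chains_def if_distrib cong: if_cong)
    qed
    also have "\<dots> \<in> vs.span W"
      by (intro vs.span_sum vs.span_scale vs.span_base) (auto simp: W_def)
    finally show "c \<in> vs.span W" .
  qed
  have bW: "boundaries TYPE('f) V E q \<subseteq> chains TYPE('f) V E q"
    by (auto simp: boundaries_def chains_def boundary_def split: if_splits)
  obtain B where B: "B \<subseteq> boundaries TYPE('f) V E q" "vs.independent B"
      "boundaries TYPE('f) V E q \<subseteq> vs.span B" "card B = vs.dim (boundaries TYPE('f) V E q)"
    by (rule vs.basis_exists)
  have finB: "finite B" using vs.independent_span_bound[OF finW B(2)] B(1) bW chW by auto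
  have "cycles TYPE('f) V E q \<subseteq> vs.span B" using sub B(3) by auto
  then have "vs.dim (cycles TYPE('f) V E q) \<le> card B" using finB by (rule vs.dim_le_card)
  then show ?thesis by (simp add: betti_def B(4))
qed

lemma betti_curve_axis_zero:
  assumes fin: "finite V" and ne: "V \<noteq> {}" and k: "k > 0"
  shows "betti_curve TYPE('f::field) V (axis_dist \<beta>) k t = 0"
proof -
  let ?M = "axis_dist \<beta>"
  let ?E = "Gt_edge V ?M t"
  obtain v where "is_arg_min (\<lambda>x. (\<beta> x)^2) (\<lambda>x. x \<in> V) v"
    using ex_is_arg_min_if_finite[OF fin ne, of "\<lambda>x. (\<beta> x)^2"] by blast
  then have vV: "v \<in> V" and vmin: "\<And>x. x \<in> V \<Longrightarrow> (\<beta> v)^2 \<le> (\<beta> x)^2"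
    by (auto simp: is_arg_min_def not_less)
  have Msym: "?M x y = ?M y x" for x y by (simp add: axis_dist_def add.commute)
  have osym: "ordering_matrix V ?M x y = ordering_matrix V ?M y x" for x y
    by (simp add: ordering_matrix_def Msym)
  have Ein: "?E x y \<Longrightarrow> x \<in> V \<and> y \<in> V \<and> x \<noteq> y" for x y by (simp add: Gt_edge_def)
  have Esym: "?E x y \<Longrightarrow> ?E y x" for x y using osym by (auto simp: Gt_edge_def)
  have Econe: "?E x v" if e: "?E x y" and xv: "x \<noteq> v" for x y
  proof -
    have xy: "x \<in> V" "y \<in> V" "x \<noteq> y" using e by (auto simp: Gt_edge_def)
    have "?M x v \<le> ?M x y" using xy xv vmin[OF xy(2)] by (simp add: axis_dist_def)
    then have "{(a,b). a \<in> V \<and> b \<in> V \<and> a < b \<and> ?M a b \<le> ?M x v}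
             \<subseteq> {(a,b). a \<in> V \<and> b \<in> V \<and> a < b \<and> ?M a b \<le> ?M x y}" by auto
    moreover have "finite {(a,b). a \<in> V \<and> b \<in> V \<and> a < b \<and> ?M a b \<le> ?M x y}"
      by (rule finite_subset[of _ "V \<times> V"]) (use fin in auto)
    ultimately have "ordering_matrix V ?M x v \<le> ordering_matrix V ?M x y"
      unfolding ordering_matrix_def by (rule card_mono[rotated])
    then show ?thesis using e xv vV by (auto simp: Gt_edge_def)
  qed
  have "cycles TYPE('f) V ?E k \<subseteq> boundaries TYPE('f) V ?E k"
  proof
    fix z assume "z \<in> cycles TYPE('f) V ?E k"
    then show "z \<in> boundaries TYPE('f) V ?E k"
      using cone_cycles_are_boundaries[of V v ?E k z] fin vV Ein Esym Econe k by blast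
  qed
  then show ?thesis unfolding betti_curve_def by (rule betti_zero[OF fin])
qed

theorem mainTheorem3:
  fixes n :: nat and \<alpha> :: "nat \<Rightarrow> real" and k :: nat and t :: real
  assumes "n \<ge> 2" and "k > 0" and "0 \<le> t" and "t \<le> 1"
  shows "(offdiag_distinct {1..n} (axis_dist \<alpha>) \<longrightarrow>
            betti_curve TYPE('f::field) {1..n} (axis_dist \<alpha>) k t = 0)
       \<and> (offdiag_distinct {0..n} (axis_dist (\<alpha>(0 := 0))) \<longrightarrow>
            betti_curve TYPE('f::field) {0..n} (axis_dist (\<alpha>(0 := 0))) k t = 0)"
  using betti_curve_axis_zero[of "{1..n}" k] betti_curve_axis_zero[of "{0..n}" k] assms by auto

end
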